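(* Assume $\mu$ is finite, let $C(\eta)=\int_\Omega(1-\eta)\,\mathrm d\mu$ be the uniform cost, and let $\mathrm k$ be a kernel with finite double norm whose support $\{\mathrm k>0\}$ is a.e. symmetric. Then for a measurable set $A$, the strategy $\mathbb 1_A$ is Pareto optimal with $R_e[\mathrm k](\mathbb 1_A)=0$ if and only if $A$ is a maximal independent set of $\mathrm k$ (i.e. an independent set with $\mu(A)=\alpha(\mathrm k)$), and every Pareto optimal $\eta$ with $R_e[\mathrm k](\eta)=0$ is of this form. In particular maximal independent sets exist and $$c_\star=C_\star(0)=\mu(\Omega)-\alpha(\mathrm k).$$
   Context: Let $(\Omega,\mathscr F,\mu)$ be a measure space with $\mu$ a finite non-zero positive measure; functions equal $\mu$-a.e. are identified. $\Delta$ is the set of measurable $\eta:\Omega\to[0,1]$. A kernel is a measurable $\mathrm k:\Omega^2\to[0,\infty)$ with finite double norm: for some $p\in(1,\infty)$, $1/p+1/q=1$, $\big(\int(\int \mathrm k(x,y)^q\mu(\mathrm dy))^{p/q}\mu(\mathrm dx)\big)^{1/p}<\infty$; $T_{\mathrm k}g(x)=\int\mathrm k(x,y)g(y)\mu(\mathrm dy)$ on $L^p(\mu)$. For $\eta\in\Delta$, $R_e[\mathrm k](\eta)=\rho(T_{\mathrm k\eta})$ where $(\mathrm k\eta)(x,y)=\mathrm k(x,y)\eta(y)$ and $\rho$ is the spectral radius; $R_0=R_e[\mathrm k](\mathbb 1)$. Support a.e. symmetric: $\mathbb 1_{\{\mathrm k>0\}}(x,y)=\mathbb 1_{\{\mathrm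 k>0\}}(y,x)$ for $\mu^{\otimes2}$-a.e. $(x,y)$. With cost $C$, $R_{e\star}(c)=\min\{R_e(\eta):C(\eta)\le c\}$, $C_\star(\ell)=\min\{C(\eta):R_e(\eta)\le\ell\}$, $c_\star=C_\star(0)$, Pareto set $\mathcal P=\{\eta: C(\eta)=C_\star(R_e(\eta)),\ R_e(\eta)=R_{e\star}(C(\eta))\}$. A measurable $A$ is an independent set of $\mathrm k$ if $\mathrm k=0$ $\mu^{\otimes2}$-a.e. on $A\times A$; the independence number is $\alpha(\mathrm k)=\sup\{\mu(A): A\text{ independent set of }\mathrm k\}$. *)

theory Defs
  imports "HOL-Analysis.Analysis" "HOL-Probability.Probability"
begin

definition strategies :: "'a measure \<Rightarrow> ('a \<Rightarrow> real) set" where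
  "strategies M = {\<eta> \<in> borel_measurable M. \<forall>x\<in>space M. 0 \<le> \<eta> x \<and> \<eta> x \<le> 1}"

definition conj_exp :: "real \<Rightarrow> real" where
  "conj_exp p = p / (p - 1)"

definition is_kernel :: "'a measure \<Rightarrow> real \<Rightarrow> ('a \<Rightarrow> 'a \<Rightarrow> real) \<Rightarrow> bool" where
  "is_kernel M p k \<longleftrightarrow>
     1 < p \<and>
     (\<lambda>z. k (fst z) (snd z)) \<in> borel_measurable (M \<Otimes>\<^sub>M M) \<and>
     (\<forall>x\<in>space M. \<forall>y\<in>space M. 0 \<le> k x y) \<and>
     (AE x in M. (\<integral>\<^sup>+ y. ennreal (k x y powr conj_exp p) \<partial>M) < \<infinity>) \<and>
     (\<integral>\<^sup>+ x. ennreal ((enn2real (\<integral>\<^sup>+ y. ennreal (k x y powr conj_exp p) \<partial>M))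
                        powr (p / conj_exp p)) \<partial>M) < \<infinity>"

definition support_ae_symmetric :: "'a measure \<Rightarrow> ('a \<Rightarrow> 'a \<Rightarrow> real) \<Rightarrow> bool" where
  "support_ae_symmetric M k \<longleftrightarrow>
     (AE z in M \<Otimes>\<^sub>M M. (0 < k (fst z) (snd z)) \<longleftrightarrow> (0 < k (snd z) (fst z)))"

definition Lp_space :: "real \<Rightarrow> 'a measure \<Rightarrow> ('a \<Rightarrow> real) set" where
  "Lp_space p M = {g \<in> borel_measurable M. integrable M (\<lambda>x. \<bar>g x\<bar> powr p)}"

definition Lp_norm :: "real \<Rightarrow> 'a measure \<Rightarrow> ('a \<Rightarrow> real) \<Rightarrow> real" where
  "Lp_norm p M g = (\<integral>x. \<bar>g x\<bar> powr p \<partial>M) powr (1 / p)"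

definition T_op :: "'a measure \<Rightarrow> ('a \<Rightarrow> 'a \<Rightarrow> real) \<Rightarrow> ('a \<Rightarrow> real) \<Rightarrow> ('a \<Rightarrow> real) \<Rightarrow> ('a \<Rightarrow> real)" where
  "T_op M k \<eta> g = (\<lambda>x. \<integral>y. k x y * \<eta> y * g y \<partial>M)"

definition op_norm :: "real \<Rightarrow> 'a measure \<Rightarrow> (('a \<Rightarrow> real) \<Rightarrow> ('a \<Rightarrow> real)) \<Rightarrow> real" where
  "op_norm p M T = Sup ((\<lambda>g. Lp_norm p M (T g)) ` {g \<in> Lp_space p M. Lp_norm p M g \<le> 1})"

text \<open>Spectral radius of a bounded operator on L^p, via Gelfand's formula
  rho(T) = lim ||T^n||^(1/n) = inf_{n>=1} ||T^n||^(1/n).\<close>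
definition spectral_radius :: "real \<Rightarrow> 'a measure \<Rightarrow> (('a \<Rightarrow> real) \<Rightarrow> ('a \<Rightarrow> real)) \<Rightarrow> real" where
  "spectral_radius p M T = Inf ((\<lambda>n::nat. op_norm p M (T ^^ n) powr (1 / real n)) ` {1..})"

definition R_e :: "real \<Rightarrow> 'a measure \<Rightarrow> ('a \<Rightarrow> 'a \<Rightarrow> real) \<Rightarrow> ('a \<Rightarrow> real) \<Rightarrow> real" where
  "R_e p M k \<eta> = spectral_radius p M (T_op M k \<eta>)"

definition unif_cost :: "'a measure \<Rightarrow> ('a \<Rightarrow> real) \<Rightarrow> real" where
  "unif_cost M \<eta> = (\<integral>x. (1 - \<eta> x) \<partial>M)"

definition R_e_star :: "real \<Rightarrow> 'a measure \<Rightarrow> ('a \<Rightarrow> 'a \<Rightarrow> real) \<Rightarrow> real \<Rightarrow> real" where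
  "R_e_star p M k c = Inf (R_e p M k ` {\<eta> \<in> strategies M. unif_cost M \<eta> \<le> c})"

definition C_star :: "real \<Rightarrow> 'a measure \<Rightarrow> ('a \<Rightarrow> 'a \<Rightarrow> real) \<Rightarrow> real \<Rightarrow> real" where
  "C_star p M k l = Inf (unif_cost M ` {\<eta> \<in> strategies M. R_e p M k \<eta> \<le> l})"

definition pareto_optimal :: "real \<Rightarrow> 'a measure \<Rightarrow> ('a \<Rightarrow> 'a \<Rightarrow> real) \<Rightarrow> ('a \<Rightarrow> real) \<Rightarrow> bool" where
  "pareto_optimal p M k \<eta> \<longleftrightarrow>
     \<eta> \<in> strategies M \<and>
     unif_cost M \<eta> = C_star p M k (R_e p M k \<eta>) \<and>
     R_e p M k \<eta> = R_e_star p M k (unif_cost M \<eta>)"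

definition independent_set :: "'a measure \<Rightarrow> ('a \<Rightarrow> 'a \<Rightarrow> real) \<Rightarrow> 'a set \<Rightarrow> bool" where
  "independent_set M k A \<longleftrightarrow>
     A \<in> sets M \<and> (AE z in M \<Otimes>\<^sub>M M. z \<in> A \<times> A \<longrightarrow> k (fst z) (snd z) = 0)"

definition independence_number :: "'a measure \<Rightarrow> ('a \<Rightarrow> 'a \<Rightarrow> real) \<Rightarrow> real" where
  "independence_number M k = Sup (measure M ` {A. independent_set M k A})"

definition maximal_independent_set :: "'a measure \<Rightarrow> ('a \<Rightarrow> 'a \<Rightarrow> real) \<Rightarrow> 'a set \<Rightarrow> bool" where
  "maximal_independent_set M k A \<longleftrightarrow>
     independent_set M k A \<and> measure M A = independence_number M k"

end

theory Submission
  imports Defs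
begin

lemma Re_nonneg: "0 \<le> R_e p M k \<eta>"
  unfolding R_e_def spectral_radius_def
  by (rule cInf_greatest) auto

lemma indep_le_alpha:
  assumes "finite_measure M" "independent_set M k A"
  shows "measure M A \<le> independence_number M k"
  unfolding independence_number_def
proof (rule cSup_upper)
  show "measure M A \<in> measure M ` {A. independent_set M k A}" using assms by auto
  show "bdd_above (measure M ` {A. independent_set M k A})"
    using assms(1) finite_measure.bounded_measure[of M]
    by (auto simp: bdd_above_def independent_set_def intro!: exI[of _ "measure M (space M)"])
qed

lemma ultrafilter_exists:
  "\<exists>U::nat filter. U \<noteq> bot \<and> U \<le> sequentially \<and> (\<forall>P. eventually P U \<or> eventually (\<lambda>x. \<not> P x) U)"
proof -
  define S where "S = {F::nat filter. F \<noteq> bot \<and> F \<le> sequentially}"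
  define r where "r = {(F, G). F \<in> S \<and> G \<in> S \<and> G \<le> F}"
  have seqS: "sequentially \<in> S" by (simp add: S_def)
  have Fr: "Field r = S" by (auto simp: Field_def r_def)
  have po: "Partial_order r"
    unfolding Fr partial_order_on_def preorder_on_def refl_on_def trans_def antisym_def
    by (auto simp: r_def)
  have "\<exists>m\<in>Field r. \<forall>a\<in>Field r. (m, a) \<in> r \<longrightarrow> a = m"
  proof (rule Zorns_po_lemma[OF po])
    fix C assume C: "C \<in> Chains r"
    show "\<exists>u\<in>Field r. \<forall>a\<in>C. (a, u) \<in> r"
    proof (cases "C = {}")
      case True then show ?thesis using seqS Fr by auto
    next
      case False
      have CS: "C \<subseteq> S" using C by (auto simp: Chains_def r_def)
      have base: "\<exists>x\<in>C. x \<le> inf F G" if "F \<in> C" "G \<in> C" for F G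
      proof -
        have "(F, G) \<in> r \<or> (G, F) \<in> r" using C that unfolding Chains_def by blast
        then show ?thesis
        proof
          assume "(F, G) \<in> r" then have "G \<le> F" by (simp add: r_def)
          then show ?thesis using that by (intro bexI[of _ G]) (auto simp: le_inf_iff)
        next
          assume "(G, F) \<in> r" then have "F \<le> G" by (simp add: r_def)
          then show ?thesis using that by (intro bexI[of _ F]) (auto simp: le_inf_iff)
        qed
      qed
      have ev: "eventually P (Inf C) \<longleftrightarrow> (\<exists>b\<in>C. eventually P b)" for P
        by (rule eventually_Inf_base[OF False base])
      have nb: "Inf C \<noteq> bot"
        using ev[of "\<lambda>_. False"] CS by (auto simp: S_def trivial_limit_def)
      obtain F where "F \<in> C" using False by auto
      then have "Inf C \<le> F" by (rule Inf_lower)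
      moreover have "F \<le> sequentially" using CS \<open>F \<in> C\<close> by (auto simp: S_def)
      ultimately have "Inf C \<le> sequentially" by (rule order_trans)
      with nb have IS: "Inf C \<in> S" by (simp add: S_def)
      have "\<forall>a\<in>C. (a, Inf C) \<in> r"
      proof
        fix a assume "a \<in> C"
        then have "a \<in> S" "Inf C \<le> a" using CS by (auto intro: Inf_lower)
        then show "(a, Inf C) \<in> r" using IS by (simp add: r_def)
      qed
      then show ?thesis using IS Fr by blast
    qed
  qed
  then obtain m where m: "m \<in> S" and max0: "\<And>a. a \<in> S \<Longrightarrow> (m, a) \<in> r \<Longrightarrow> a = m"
    unfolding Fr by blast
  have max: "\<And>a. a \<in> S \<Longrightarrow> a \<le> m \<Longrightarrow> a = m"
    using max0 m by (simp add: r_def)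
  have "eventually P m \<or> eventually (\<lambda>x. \<not> P x) m" for P
  proof (cases "eventually P m")
    case False
    define a where "a = inf m (principal {x. \<not> P x})"
    have "a \<noteq> bot" using False
      by (simp add: a_def trivial_limit_def eventually_inf_principal)
    moreover have "a \<le> m" by (simp add: a_def)
    ultimately have "a \<in> S" using m by (auto simp: S_def)
    then have "a = m" using max \<open>a \<le> m\<close> by blast
    moreover have "eventually (\<lambda>x. \<not> P x) a" by (simp add: a_def eventually_inf_principal)
    ultimately show ?thesis by simp
  qed simp
  then show ?thesis using m by (auto simp: S_def)
qed

lemma ultra_tendsto_ex:
  fixes f :: "nat \<Rightarrow> real"
  assumes U: "U \<noteq> bot" "\<forall>P. eventually P U \<or> eventually (\<lambda>x. \<not> P x) U"
    and b: "\<And>n. a \<le> f n \<and> f n \<le> b"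
  shows "\<exists>L. (f \<longlongrightarrow> L) U"
proof -
  have "compact {a..b}" by simp
  moreover have "filtermap f U \<noteq> bot" using U(1) by (simp add: filtermap_bot_iff)
  moreover have "eventually (\<lambda>x. x \<in> {a..b}) (filtermap f U)"
    using b by (simp add: eventually_filtermap)
  ultimately obtain x where x: "inf (nhds x) (filtermap f U) \<noteq> bot"
    unfolding compact_filter by blast
  have "(f \<longlongrightarrow> x) U"
  proof (rule topological_tendstoI)
    fix S assume S: "open S" "x \<in> S"
    show "eventually (\<lambda>n. f n \<in> S) U"
    proof (rule ccontr)
      assume "\<not> eventually (\<lambda>n. f n \<in> S) U"
      then have "eventually (\<lambda>n. f n \<notin> S) U" using U(2) by blast
      then have e1: "eventually (\<lambda>y. y \<notin> S) (filtermap f U)" by (simp add: eventually_filtermap)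
      have e2: "eventually (\<lambda>y. y \<in> S) (nhds x)" using S by (rule eventually_nhds_in_open)
      have "eventually (\<lambda>_. False) (inf (nhds x) (filtermap f U))"
        unfolding eventually_inf using e1 e2 by blast
      then show False using x by (simp add: trivial_limit_def)
    qed
  qed
  then show ?thesis by blast
qed

lemma fm_split_union:
  fixes D :: "nat \<Rightarrow> 'a set" and m :: nat
  assumes "finite_measure N" "range D \<subseteq> sets N" "disjoint_family D"
  shows "measure N (\<Union>i. D i) = (\<Sum>i<m. measure N (D i)) + measure N (\<Union>i\<in>{m..}. D i)"
proof -
  interpret finite_measure N by fact
  have U: "{..<m} \<union> {m..} = (UNIV::nat set)" by auto
  have eq: "(\<Union>i. D i) = (\<Union>i\<in>{..<m}. D i) \<union> (\<Union>i\<in>{m..}. D i)"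
    by (metis U UN_Un)
  have dj: "(\<Union>i\<in>{..<m}. D i) \<inter> (\<Union>i\<in>{m..}. D i) = {}"
  proof (rule equals0I)
    fix x assume "x \<in> (\<Union>i\<in>{..<m}. D i) \<inter> (\<Union>i\<in>{m..}. D i)"
    then obtain i j where "i < m" "m \<le> j" "x \<in> D i" "x \<in> D j" by auto
    then have "i \<noteq> j" "x \<in> D i \<inter> D j" by auto
    then show False using assms(3) unfolding disjoint_family_on_def by blast
  qed
  have "measure N (\<Union>i. D i) = measure N (\<Union>i\<in>{..<m}. D i) + measure N (\<Union>i\<in>{m..}. D i)"
    unfolding eq using assms(2) dj by (intro finite_measure_Union) auto
  moreover have "measure N (\<Union>i\<in>{..<m}. D i) = (\<Sum>i<m. measure N (D i))"
    using assms(2,3) by (intro finite_measure_finite_Union) (auto intro: disjoint_family_on_mono)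
  ultimately show ?thesis by simp
qed

lemma fm_tail:
  fixes D :: "nat \<Rightarrow> 'a set"
  assumes "finite_measure N" "range D \<subseteq> sets N" "disjoint_family D"
  shows "(\<lambda>m. measure N (\<Union>i\<in>{m..}. D i)) \<longlonglongrightarrow> 0"
proof -
  interpret finite_measure N by fact
  have s: "(\<lambda>m. \<Sum>i<m. measure N (D i)) \<longlonglongrightarrow> measure N (\<Union>i. D i)"
    using finite_measure_UNION[OF assms(2,3)] by (simp add: sums_def)
  have "(\<lambda>m. measure N (\<Union>i. D i) - (\<Sum>i<m. measure N (D i))) \<longlonglongrightarrow> measure N (\<Union>i. D i) - measure N (\<Union>i. D i)"
    by (intro tendsto_intros s)
  moreover have "measure N (\<Union>i\<in>{m..}. D i) = measure N (\<Union>i. D i) - (\<Sum>i<m. measure N (D i))" for m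
    using fm_split_union[OF assms, of m] by simp
  ultimately show ?thesis by simp
qed

lemma tendsto_approx:
  fixes f :: "'b \<Rightarrow> real"
  assumes "\<And>e. e > 0 \<Longrightarrow> \<exists>g c. (g \<longlongrightarrow> c) F \<and> \<bar>c - L\<bar> \<le> e \<and> eventually (\<lambda>n. \<bar>f n - g n\<bar> \<le> e) F"
  shows "(f \<longlongrightarrow> L) F"
proof (rule tendstoI)
  fix e :: real assume e: "e > 0"
  then obtain g c where g: "(g \<longlongrightarrow> c) F" "\<bar>c - L\<bar> \<le> e/3" "eventually (\<lambda>n. \<bar>f n - g n\<bar> \<le> e/3) F"
    using assms[of "e/3"] by auto
  have "eventually (\<lambda>n. dist (g n) c < e/3) F" using g(1) e by (intro tendstoD) auto
  with g(3) show "eventually (\<lambda>n. dist (f n) L < e) F"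
  proof eventually_elim
    case (elim n)
    then show ?case using g(2) unfolding dist_real_def by arith
  qed
qed

lemma holder_aux:
  fixes f g :: "'a \<Rightarrow> real" and p q :: real
  assumes pq: "p > 1" "q > 1" "1/p + 1/q = 1"
    and fm: "f \<in> borel_measurable M" and gm: "g \<in> borel_measurable M"
    and f0: "\<And>x. x \<in> space M \<Longrightarrow> 0 \<le> f x" and g0: "\<And>x. x \<in> space M \<Longrightarrow> 0 \<le> g x"
    and fi: "integrable M (\<lambda>x. f x powr q)" and gi: "integrable M (\<lambda>x. g x powr p)"
  shows "integrable M (\<lambda>x. f x * g x)"
    "(\<integral>x. f x * g x \<partial>M) \<le> (\<integral>x. f x powr q \<partial>M) powr (1/q) * (\<integral>x. g x powr p \<partial>M) powr (1/p)"
proof -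
  have young: "a * b \<le> a powr q / q + b powr p / p" if "0 \<le> a" "0 \<le> b" for a b :: real
    using Youngs_inequality[of q p a b] pq that by (simp add: add.commute)
  have maj: "integrable M (\<lambda>x. f x powr q / q + g x powr p / p)"
    using fi gi by auto
  show int: "integrable M (\<lambda>x. f x * g x)"
  proof (rule Bochner_Integration.integrable_bound[OF maj])
    show "(\<lambda>x. f x * g x) \<in> borel_measurable M" using fm gm by measurable
    show "AE x in M. norm (f x * g x) \<le> norm (f x powr q / q + g x powr p / p)"
      using young f0 g0 pq by (intro AE_I2) (auto simp: abs_mult)
  qed
  define F where "F = (\<integral>x. f x powr q \<partial>M)"
  define G where "G = (\<integral>x. g x powr p \<partial>M)"
  have F0: "0 \<le> F" unfolding F_def by simp
  have G0: "0 \<le> G" unfolding G_def by simp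
  show "(\<integral>x. f x * g x \<partial>M) \<le> F powr (1/q) * G powr (1/p)"
  proof (cases "F = 0 \<or> G = 0")
    case True
    have "AE x in M. f x * g x = 0"
    proof (cases "F = 0")
      case True
      then have "AE x in M. f x powr q = 0"
        using fi unfolding F_def by (subst (asm) integral_nonneg_eq_0_iff_AE) auto
      then show ?thesis by eventually_elim simp
    next
      case False
      with \<open>F = 0 \<or> G = 0\<close> have "G = 0" by simp
      then have "AE x in M. g x powr p = 0"
        using gi unfolding G_def by (subst (asm) integral_nonneg_eq_0_iff_AE) auto
      then show ?thesis by eventually_elim simp
    qed
    then have "(\<integral>x. f x * g x \<partial>M) = 0" by (rule integral_eq_zero_AE)
    then show ?thesis by simp
  next
    case False
    then have Fp: "F > 0" and Gp: "G > 0" using F0 G0 by auto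
    define a where "a = F powr (1/q)"
    define b where "b = G powr (1/p)"
    have ap: "a > 0" "a powr q = F" using Fp pq unfolding a_def by (auto simp: powr_powr)
    have bp: "b > 0" "b powr p = G" using Gp pq unfolding b_def by (auto simp: powr_powr)
    have pt: "f x * g x / (a * b) \<le> f x powr q / (q * F) + g x powr p / (p * G)" if "x \<in> space M" for x
    proof -
      have "(f x / a) * (g x / b) \<le> (f x / a) powr q / q + (g x / b) powr p / p"
        using young[of "f x / a" "g x / b"] f0 g0 that ap bp by auto
      also have "\<dots> = f x powr q / (q * F) + g x powr p / (p * G)"
        by (simp add: powr_divide ap bp mult.commute)
      finally show ?thesis by simp
    qed
    have "(\<integral>x. f x * g x / (a * b) \<partial>M) \<le> (\<integral>x. f x powr q / (q * F) + g x powr p / (p * G) \<partial>M)"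
      using pt int fi gi by (intro integral_mono) auto
    also have "\<dots> = F / (q * F) + G / (p * G)"
      using fi gi by (simp add: F_def G_def)
    also have "\<dots> = 1" using Fp Gp pq by (simp add: add.commute)
    finally have "(\<integral>x. f x * g x \<partial>M) / (a * b) \<le> 1" by simp
    moreover have "a * b > 0" using ap bp by simp
    ultimately have "(\<integral>x. f x * g x \<partial>M) \<le> a * b" by (simp add: divide_le_eq)
    then show ?thesis by (simp add: a_def b_def)
  qed
qed

locale kop =
  fixes M :: "'a measure" and p :: real and k :: "'a \<Rightarrow> 'a \<Rightarrow> real" and \<eta> :: "'a \<Rightarrow> real"
  assumes fm: "finite_measure M" and ker: "is_kernel M p k" and st: "\<eta> \<in> strategies M"
begin

abbreviation "q \<equiv> conj_exp p"
abbreviation "Kn x \<equiv> (\<integral>\<^sup>+ y. ennreal (k x y powr q) \<partial>M)"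
abbreviation "T \<equiv> T_op M k \<eta>"
abbreviation "Nk \<equiv> (\<integral>x. enn2real (Kn x) powr (p / q) \<partial>M)"
abbreviation "N \<equiv> Nk powr (1/p)"

lemma p1: "p > 1" using ker by (simp add: is_kernel_def)
lemma q1: "q > 1" using p1 by (simp add: conj_exp_def field_simps)
lemma pq: "1/p + 1/q = 1" using p1 by (simp add: conj_exp_def field_simps)
lemma km[measurable]: "(\<lambda>z. k (fst z) (snd z)) \<in> borel_measurable (M \<Otimes>\<^sub>M M)"
  using ker by (simp add: is_kernel_def)
lemma k0: "x \<in> space M \<Longrightarrow> y \<in> space M \<Longrightarrow> 0 \<le> k x y"
  using ker by (simp add: is_kernel_def)
lemma Kfin: "AE x in M. Kn x < \<infinity>"
  using ker by (simp add: is_kernel_def)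
lemma Knn: "(\<integral>\<^sup>+ x. ennreal (enn2real (Kn x) powr (p / q)) \<partial>M) < \<infinity>"
  using ker by (simp add: is_kernel_def)
lemma \<eta>m[measurable]: "\<eta> \<in> borel_measurable M" using st by (simp add: strategies_def)
lemma \<eta>01: "x \<in> space M \<Longrightarrow> 0 \<le> \<eta> x \<and> \<eta> x \<le> 1" using st by (simp add: strategies_def)

sublocale finite_measure M by (rule fm)
sublocale P: pair_sigma_finite M M by unfold_locales

lemma kx_meas[measurable]: "x \<in> space M \<Longrightarrow> (\<lambda>y. k x y) \<in> borel_measurable M"
  using measurable_Pair2[OF km] by simp

lemma Kn_meas[measurable]: "(\<lambda>x. Kn x) \<in> borel_measurable M"
  by measurable

lemma Kint: "integrable M (\<lambda>x. enn2real (Kn x) powr (p / q))"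
  by (rule integrableI_nonneg) (use Knn in auto)

lemma Tmeas: assumes [measurable]: "g \<in> borel_measurable M" shows "T g \<in> borel_measurable M"
  unfolding T_op_def by measurable

lemma aux_le: fixes a e b :: real shows "0 \<le> a \<Longrightarrow> 0 \<le> e \<Longrightarrow> e \<le> 1 \<Longrightarrow> a * e * \<bar>b\<bar> \<le> a * \<bar>b\<bar>"
proof -
  assume "0 \<le> a" "0 \<le> e" "e \<le> 1"
  then have "e * (a * \<bar>b\<bar>) \<le> a * \<bar>b\<bar>" by (intro mult_left_le_one_le) auto
  then show ?thesis by (simp add: ac_simps)
qed

lemma Tpt:
  assumes x: "x \<in> space M" "Kn x < \<infinity>" and g: "g \<in> Lp_space p M"
  shows "integrable M (\<lambda>y. k x y * \<eta> y * g y)"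
    "\<bar>T g x\<bar> \<le> enn2real (Kn x) powr (1/q) * (\<integral>y. \<bar>g y\<bar> powr p \<partial>M) powr (1/p)"
proof -
  have gm[measurable]: "g \<in> borel_measurable M" using g by (simp add: Lp_space_def)
  have gi: "integrable M (\<lambda>y. \<bar>g y\<bar> powr p)" using g by (simp add: Lp_space_def)
  have fi: "integrable M (\<lambda>y. k x y powr q)"
    by (rule integrableI_nonneg) (use x in auto)
  have fe: "(\<integral>y. k x y powr q \<partial>M) = enn2real (Kn x)"
    using x by (subst integral_eq_nn_integral) auto
  note H = holder_aux[where p=p and q=q and f="\<lambda>y. k x y" and g="\<lambda>y. \<bar>g y\<bar>" and M=M]
  have H1: "integrable M (\<lambda>y. k x y * \<bar>g y\<bar>)"
    using H(1) p1 q1 pq x k0 gi fi by auto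
  have H2: "(\<integral>y. k x y * \<bar>g y\<bar> \<partial>M) \<le> enn2real (Kn x) powr (1/q) * (\<integral>y. \<bar>g y\<bar> powr p \<partial>M) powr (1/p)"
    using H(2) p1 q1 pq x k0 gi fi fe by auto
  show int: "integrable M (\<lambda>y. k x y * \<eta> y * g y)"
  proof (rule Bochner_Integration.integrable_bound[OF H1])
    show "(\<lambda>y. k x y * \<eta> y * g y) \<in> borel_measurable M" using x by measurable
    show "AE y in M. norm (k x y * \<eta> y * g y) \<le> norm (k x y * \<bar>g y\<bar>)"
    proof (rule AE_I2)
      fix y assume y: "y \<in> space M"
      have "\<bar>k x y * \<eta> y * g y\<bar> = k x y * \<eta> y * \<bar>g y\<bar>"
        using k0[OF x(1) y] \<eta>01[OF y] by (simp add: abs_mult)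
      also have "\<dots> \<le> k x y * \<bar>g y\<bar>"
        using k0[OF x(1) y] \<eta>01[OF y] by (intro aux_le) auto
      finally show "norm (k x y * \<eta> y * g y) \<le> norm (k x y * \<bar>g y\<bar>)"
        using k0[OF x(1) y] by (simp add: abs_mult)
    qed
  qed
  have "\<bar>T g x\<bar> \<le> (\<integral>y. \<bar>k x y * \<eta> y * g y\<bar> \<partial>M)"
    unfolding T_op_def using integral_norm_bound[of M "\<lambda>y. k x y * \<eta> y * g y"] by simp
  also have "\<dots> \<le> (\<integral>y. k x y * \<bar>g y\<bar> \<partial>M)"
  proof (rule integral_mono[OF _ H1])
    show "integrable M (\<lambda>y. \<bar>k x y * \<eta> y * g y\<bar>)" using int by auto
    fix y assume y: "y \<in> space M"
    show "\<bar>k x y * \<eta> y * g y\<bar> \<le> k x y * \<bar>g y\<bar>"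
      using k0[OF x(1) y] \<eta>01[OF y] aux_le[of "k x y" "\<eta> y" "g y"] by (simp add: abs_mult)
  qed
  finally show "\<bar>T g x\<bar> \<le> enn2real (Kn x) powr (1/q) * (\<integral>y. \<bar>g y\<bar> powr p \<partial>M) powr (1/p)"
    using H2 by simp
qed

lemma Nk_nonneg: "0 \<le> Nk" by simp

lemma Tbound:
  assumes g: "g \<in> Lp_space p M"
  shows "T g \<in> Lp_space p M" "Lp_norm p M (T g) \<le> N * Lp_norm p M g"
proof -
  have gm[measurable]: "g \<in> borel_measurable M" using g by (simp add: Lp_space_def)
  define I where "I = (\<integral>y. \<bar>g y\<bar> powr p \<partial>M)"
  have I0: "0 \<le> I" unfolding I_def by simp
  have Tgm[measurable]: "T g \<in> borel_measurable M" by (rule Tmeas[OF gm])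
  have pt: "AE x in M. \<bar>T g x\<bar> powr p \<le> enn2real (Kn x) powr (p / q) * I"
    using Kfin AE_space
  proof (eventually_elim)
    case (elim x)
    have "\<bar>T g x\<bar> powr p \<le> (enn2real (Kn x) powr (1/q) * I powr (1/p)) powr p"
      using Tpt(2)[OF elim(2) elim(1) g] p1 by (intro powr_mono2) (auto simp: I_def)
    also have "\<dots> = enn2real (Kn x) powr (p / q) * I"
      using p1 I0 by (simp add: powr_mult powr_powr)
    finally show ?case .
  qed
  have maj: "integrable M (\<lambda>x. enn2real (Kn x) powr (p / q) * I)"
    using Kint by simp
  have int: "integrable M (\<lambda>x. \<bar>T g x\<bar> powr p)"
  proof (rule Bochner_Integration.integrable_bound[OF maj])
    show "(\<lambda>x. \<bar>T g x\<bar> powr p) \<in> borel_measurable M" by measurable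
    show "AE x in M. norm (\<bar>T g x\<bar> powr p) \<le> norm (enn2real (Kn x) powr (p / q) * I)"
      using pt by eventually_elim (use I0 in auto)
  qed
  show "T g \<in> Lp_space p M" using int by (simp add: Lp_space_def)
  have "(\<integral>x. \<bar>T g x\<bar> powr p \<partial>M) \<le> (\<integral>x. enn2real (Kn x) powr (p / q) * I \<partial>M)"
    by (rule integral_mono_AE[OF int maj pt])
  also have "\<dots> = Nk * I" by simp
  finally have le: "(\<integral>x. \<bar>T g x\<bar> powr p \<partial>M) \<le> Nk * I" .
  have "Lp_norm p M (T g) \<le> (Nk * I) powr (1/p)"
    unfolding Lp_norm_def using le p1 by (intro powr_mono2) auto
  also have "\<dots> = N * Lp_norm p M g"
    by (simp add: Lp_norm_def powr_mult I_def)
  finally show "Lp_norm p M (T g) \<le> N * Lp_norm p M g" .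
qed

lemma N_nonneg: "0 \<le> N" by simp

lemma Lp_norm_nonneg: "0 \<le> Lp_norm p M g" by (simp add: Lp_norm_def)

lemma Titer:
  assumes g: "g \<in> Lp_space p M"
  shows "(T ^^ n) g \<in> Lp_space p M \<and> Lp_norm p M ((T ^^ n) g) \<le> N ^ n * Lp_norm p M g"
proof (induction n)
  case 0
  then show ?case using g by simp
next
  case (Suc n)
  have "Lp_norm p M ((T ^^ Suc n) g) \<le> N * Lp_norm p M ((T ^^ n) g)"
    using Tbound(2)[of "(T ^^ n) g"] Suc by simp
  also have "\<dots> \<le> N * (N ^ n * Lp_norm p M g)"
    using Suc N_nonneg by (intro mult_left_mono) auto
  finally show ?case using Tbound(1)[of "(T ^^ n) g"] Suc by (simp add: mult.assoc)
qed

lemma opn_upper: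
  assumes g: "g \<in> Lp_space p M" "Lp_norm p M g \<le> 1"
  shows "Lp_norm p M ((T ^^ n) g) \<le> op_norm p M (T ^^ n)"
  unfolding op_norm_def
proof (rule cSup_upper)
  show "Lp_norm p M ((T ^^ n) g) \<in> (\<lambda>g. Lp_norm p M ((T ^^ n) g)) ` {g \<in> Lp_space p M. Lp_norm p M g \<le> 1}"
    using g by auto
  show "bdd_above ((\<lambda>g. Lp_norm p M ((T ^^ n) g)) ` {g \<in> Lp_space p M. Lp_norm p M g \<le> 1})"
  proof (rule bdd_aboveI2)
    fix h assume h: "h \<in> {g \<in> Lp_space p M. Lp_norm p M g \<le> 1}"
    have "Lp_norm p M ((T ^^ n) h) \<le> N ^ n * Lp_norm p M h" using Titer h by auto
    also have "\<dots> \<le> N ^ n * 1" using h N_nonneg by (intro mult_left_mono) auto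
    finally show "Lp_norm p M ((T ^^ n) h) \<le> N ^ n" by simp
  qed
qed

end

fun Sit :: "'a measure \<Rightarrow> ('a \<Rightarrow> 'a \<Rightarrow> real) \<Rightarrow> nat \<Rightarrow> 'a \<Rightarrow> ennreal" where
  "Sit M s 0 = (\<lambda>x. 1)"
| "Sit M s (Suc n) = (\<lambda>x. \<integral>\<^sup>+ y. ennreal (s x y) * Sit M s n y \<partial>M)"

context kop
begin

definition sk :: "'a \<Rightarrow> 'a \<Rightarrow> real" where
  "sk x y = min (min (k x y * \<eta> y) (k y x * \<eta> x)) 1"

lemma sk_sym: "sk x y = sk y x"
  unfolding sk_def by (simp add: min.commute)

lemma km_swap[measurable]: "(\<lambda>z. k (snd z) (fst z)) \<in> borel_measurable (M \<Otimes>\<^sub>M M)"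
proof -
  have "(\<lambda>z. (\<lambda>z. k (fst z) (snd z)) ((\<lambda>(x,y). (y, x)) z)) \<in> borel_measurable (M \<Otimes>\<^sub>M M)"
    by (rule measurable_compose[OF measurable_pair_swap' km])
  then show ?thesis by (simp add: case_prod_beta)
qed

lemma sk_meas[measurable]: "(\<lambda>z. sk (fst z) (snd z)) \<in> borel_measurable (M \<Otimes>\<^sub>M M)"
  unfolding sk_def by measurable

lemma sk_x_meas[measurable]: "x \<in> space M \<Longrightarrow> (\<lambda>y. sk x y) \<in> borel_measurable M"
  using measurable_Pair2[OF sk_meas] by simp

lemma sk_le1: "sk x y \<le> 1" unfolding sk_def by simp

lemma sk_nonneg: "x \<in> space M \<Longrightarrow> y \<in> space M \<Longrightarrow> 0 \<le> sk x y"
  unfolding sk_def using k0 \<eta>01 by auto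

lemma sk_le: "sk x y \<le> k x y * \<eta> y" unfolding sk_def by simp

abbreviation "U n \<equiv> Sit M sk n"

lemma U_meas[measurable]: "U n \<in> borel_measurable M"
proof (induction n)
  case 0 then show ?case by simp
next
  case (Suc n)
  note Suc[measurable]
  have "(\<lambda>z. ennreal (sk (fst z) (snd z)) * U n (snd z)) \<in> borel_measurable (M \<Otimes>\<^sub>M M)"
    by measurable
  then have "(\<lambda>x. \<integral>\<^sup>+ y. ennreal (sk x y) * U n y \<partial>M) \<in> borel_measurable M"
    by (intro borel_measurable_nn_integral) (simp add: case_prod_beta)
  then show ?case by simp
qed

lemma U_bound: "U n x \<le> emeasure M (space M) ^ n"
proof (induction n arbitrary: x)
  case 0 then show ?case by simp
next
  case (Suc n)
  have "U (Suc n) x = (\<integral>\<^sup>+ y. ennreal (sk x y) * U n y \<partial>M)" by simp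
  also have "\<dots> \<le> (\<integral>\<^sup>+ y. emeasure M (space M) ^ n \<partial>M)"
  proof (rule nn_integral_mono)
    fix y
    have "ennreal (sk x y) \<le> 1" using sk_le1 by (simp add: ennreal_leI)
    then have "ennreal (sk x y) * U n y \<le> 1 * emeasure M (space M) ^ n"
      using Suc by (intro mult_mono) auto
    then show "ennreal (sk x y) * U n y \<le> emeasure M (space M) ^ n" by simp
  qed
  also have "\<dots> = emeasure M (space M) ^ Suc n" by (simp add: mult.commute)
  finally show ?case .
qed

lemma U_sym: "(\<integral>\<^sup>+ x. U (Suc a) x * U b x \<partial>M) = (\<integral>\<^sup>+ x. U a x * U (Suc b) x \<partial>M)"
proof -
  have "(\<integral>\<^sup>+ x. U (Suc a) x * U b x \<partial>M) = (\<integral>\<^sup>+ x. (\<integral>\<^sup>+ y. ennreal (sk x y) * U a y * U b x \<partial>M) \<partial>M)"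
  proof (simp, intro nn_integral_cong)
    fix x assume "x \<in> space M"
    then show "(\<integral>\<^sup>+ y. ennreal (sk x y) * U a y \<partial>M) * U b x = (\<integral>\<^sup>+ y. ennreal (sk x y) * U a y * U b x \<partial>M)"
      by (intro nn_integral_multc[symmetric]) measurable
  qed
  also have "\<dots> = (\<integral>\<^sup>+ y. (\<integral>\<^sup>+ x. ennreal (sk x y) * U a y * U b x \<partial>M) \<partial>M)"
    by (rule P.Fubini'[symmetric]) (simp add: case_prod_beta)
  also have "\<dots> = (\<integral>\<^sup>+ y. U a y * (\<integral>\<^sup>+ x. ennreal (sk y x) * U b x \<partial>M) \<partial>M)"
  proof (intro nn_integral_cong)
    fix y assume "y \<in> space M"
    then show "(\<integral>\<^sup>+ x. ennreal (sk x y) * U a y * U b x \<partial>M) = U a y * (\<integral>\<^sup>+ x. ennreal (sk y x) * U b x \<partial>M)"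
      by (subst nn_integral_cmult[symmetric]) (measurable, simp add: sk_sym ac_simps)
  qed
  also have "\<dots> = (\<integral>\<^sup>+ x. U a x * U (Suc b) x \<partial>M)" by simp
  finally show ?thesis .
qed

lemma U_sym_iter: "(\<integral>\<^sup>+ x. U (a + i) x * U b x \<partial>M) = (\<integral>\<^sup>+ x. U a x * U (b + i) x \<partial>M)"
proof (induction i arbitrary: a b)
  case 0 then show ?case by simp
next
  case (Suc i)
  have "(\<integral>\<^sup>+ x. U (a + Suc i) x * U b x \<partial>M) = (\<integral>\<^sup>+ x. U (Suc a + i) x * U b x \<partial>M)" by simp
  also have "\<dots> = (\<integral>\<^sup>+ x. U (Suc a) x * U (b + i) x \<partial>M)" by (rule Suc)
  also have "\<dots> = (\<integral>\<^sup>+ x. U a x * U (Suc (b + i)) x \<partial>M)" by (rule U_sym)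
  finally show ?case by simp
qed

definition aU :: "nat \<Rightarrow> ennreal" where "aU j = (\<integral>\<^sup>+ x. U j x * U j x \<partial>M)"

lemma aU_even: "(\<integral>\<^sup>+ x. U (2 * j) x \<partial>M) = aU j"
  using U_sym_iter[of j j 0] by (simp add: aU_def mult_2)

lemma aU_CS: "aU (Suc j) ^ 2 \<le> aU j * aU (Suc (Suc j))"
proof -
  have "aU (Suc j) = (\<integral>\<^sup>+ x. U j x * U (Suc (Suc j)) x \<partial>M)"
    unfolding aU_def using U_sym[of j "Suc j"] by simp
  also have "\<dots> ^ 2 \<le> (\<integral>\<^sup>+ x. U j x ^ 2 \<partial>M) * (\<integral>\<^sup>+ x. U (Suc (Suc j)) x ^ 2 \<partial>M)"
    by (intro Cauchy_Schwarz_nn_integral U_meas)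
  also have "\<dots> = aU j * aU (Suc (Suc j))" by (simp add: aU_def power2_eq_square)
  finally show ?thesis .
qed

lemma aU_fin: "aU j < \<infinity>"
proof -
  have "aU j \<le> (\<integral>\<^sup>+ x. emeasure M (space M) ^ j * emeasure M (space M) ^ j \<partial>M)"
    unfolding aU_def by (intro nn_integral_mono mult_mono U_bound) auto
  also have "\<dots> < \<infinity>" by (simp add: ennreal_mult_less_top power_less_top_ennreal emeasure_eq_measure)
  finally show ?thesis .
qed

end

lemma ratio_lower:
  fixes b :: "nat \<Rightarrow> real"
  assumes b0: "b 0 > 0" and b1: "b 1 > 0" and cs: "\<And>j. b (Suc j) ^ 2 \<le> b j * b (Suc (Suc j))"
  shows "b j \<ge> b 0 * (b 1 / b 0) ^ j"
proof -
  define r where "r = b 1 / b 0"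
  have r0: "r > 0" using b0 b1 by (simp add: r_def)
  have step: "b j > 0 \<and> b (Suc j) \<ge> r * b j" for j
  proof (induction j)
    case 0 then show ?case using b0 by (simp add: r_def)
  next
    case (Suc j)
    then have bj: "b j > 0" and bs: "b (Suc j) \<ge> r * b j" by auto
    have bsp: "b (Suc j) > 0" using bj bs r0 by (smt (verit) mult_pos_pos)
    have "b (Suc j) * (r * b j) \<le> b (Suc j) * b (Suc j)"
      using bs bsp by (intro mult_left_mono) auto
    also have "\<dots> \<le> b j * b (Suc (Suc j))" using cs[of j] by (simp add: power2_eq_square)
    finally have "b j * (r * b (Suc j)) \<le> b j * b (Suc (Suc j))" by (simp add: ac_simps)
    then have "r * b (Suc j) \<le> b (Suc (Suc j))" using bj by simp
    then show ?case using bsp by simp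
  qed
  have "b j \<ge> b 0 * r ^ j"
  proof (induction j)
    case 0 then show ?case by simp
  next
    case (Suc j)
    have "b 0 * r ^ Suc j = r * (b 0 * r ^ j)" by simp
    also have "\<dots> \<le> r * b j" using Suc r0 by (intro mult_left_mono) auto
    also have "\<dots> \<le> b (Suc j)" using step[of j] by simp
    finally show ?case .
  qed
  then show ?thesis by (simp add: r_def)
qed

context kop
begin

abbreviation "one \<equiv> (\<lambda>x::'a. 1::real)"
abbreviation "Tn n \<equiv> (T ^^ n) one"

lemma T_apply: "T g x = (\<integral>y. k x y * \<eta> y * g y \<partial>M)"
  by (simp add: T_op_def)

lemma Tn_Suc: "Tn (Suc n) x = (\<integral>y. k x y * \<eta> y * Tn n y \<partial>M)"
  by (simp only: funpow.simps o_apply T_apply)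

lemma one_Lp: "one \<in> Lp_space p M"
  by (simp add: Lp_space_def)

lemma Tn_Lp: "Tn n \<in> Lp_space p M"
  using Titer[OF one_Lp] by blast

lemma Tn_meas[measurable]: "Tn n \<in> borel_measurable M"
  using Tn_Lp by (simp add: Lp_space_def)

lemma Tn_nonneg: "x \<in> space M \<Longrightarrow> 0 \<le> Tn n x"
proof (induction n arbitrary: x)
  case 0 then show ?case by simp
next
  case (Suc n)
  have "0 \<le> (\<integral>y. k x y * \<eta> y * Tn n y \<partial>M)"
    using Suc k0 \<eta>01 by (intro Bochner_Integration.integral_nonneg) auto
  then show ?case by (simp only: Tn_Suc)
qed

lemma compare: "AE x in M. U n x \<le> ennreal (Tn n x)"
proof (induction n)
  case 0 then show ?case by simp
next
  case (Suc n)
  show ?case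
    using Kfin AE_space
  proof eventually_elim
    case (elim x)
    have "U (Suc n) x = (\<integral>\<^sup>+ y. ennreal (sk x y) * U n y \<partial>M)" by simp
    also have "\<dots> \<le> (\<integral>\<^sup>+ y. ennreal (k x y * \<eta> y * Tn n y) \<partial>M)"
    proof (rule nn_integral_mono_AE)
      show "AE y in M. ennreal (sk x y) * U n y \<le> ennreal (k x y * \<eta> y * Tn n y)"
        using Suc AE_space
      proof eventually_elim
        case (elim y)
        have "ennreal (sk x y) * U n y \<le> ennreal (k x y * \<eta> y) * ennreal (Tn n y)"
          using elim sk_le by (intro mult_mono ennreal_leI) auto
        also have "\<dots> = ennreal (k x y * \<eta> y * Tn n y)"
          using Tn_nonneg[OF elim(2)] by (simp add: ennreal_mult'')
        finally show ?case .
      qed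
    qed
    also have "\<dots> = ennreal (\<integral>y. k x y * \<eta> y * Tn n y \<partial>M)"
      using Tpt(1)[OF elim(2) elim(1) Tn_Lp] k0[OF elim(2)] \<eta>01 Tn_nonneg
      by (intro nn_integral_eq_integral) (auto intro!: AE_I2)
    also have "\<dots> = ennreal (Tn (Suc n) x)" by (simp only: Tn_Suc)
    finally show ?case .
  qed
qed

lemma a1pos:
  assumes sym: "support_ae_symmetric M k" and a1: "aU 1 = 0"
  shows "independent_set M k {x\<in>space M. 0 < \<eta> x}"
proof -
  have "AE x in M. U 1 x * U 1 x = 0"
    using a1 unfolding aU_def by (subst (asm) nn_integral_0_iff_AE) auto
  then have "AE x in M. U 1 x = 0" by eventually_elim simp
  then have "(\<integral>\<^sup>+ x. U 1 x \<partial>M) = 0" by (subst nn_integral_0_iff_AE) auto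
  then have "(\<integral>\<^sup>+ x. \<integral>\<^sup>+ y. ennreal (sk (fst (x, y)) (snd (x, y))) \<partial>M \<partial>M) = 0" by simp
  then have "(\<integral>\<^sup>+ z. ennreal (sk (fst z) (snd z)) \<partial>(M \<Otimes>\<^sub>M M)) = 0"
    by (subst (asm) nn_integral_fst) auto
  then have ae0: "AE z in M \<Otimes>\<^sub>M M. ennreal (sk (fst z) (snd z)) = 0"
    by (subst (asm) nn_integral_0_iff_AE) auto
  have symae: "AE z in M \<Otimes>\<^sub>M M. (0 < k (fst z) (snd z)) \<longleftrightarrow> (0 < k (snd z) (fst z))"
    using sym by (simp add: support_ae_symmetric_def)
  show ?thesis
    unfolding independent_set_def
  proof
    show "{x \<in> space M. 0 < \<eta> x} \<in> sets M" by measurable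
    show "AE z in M \<Otimes>\<^sub>M M. z \<in> {x \<in> space M. 0 < \<eta> x} \<times> {x \<in> space M. 0 < \<eta> x} \<longrightarrow> k (fst z) (snd z) = 0"
      using ae0 symae
    proof eventually_elim
      case (elim z)
      obtain x y where z: "z = (x, y)" by (cases z)
      show ?case
      proof
        assume zB: "z \<in> {x \<in> space M. 0 < \<eta> x} \<times> {x \<in> space M. 0 < \<eta> x}"
        then have xy: "x \<in> space M" "y \<in> space M" "0 < \<eta> x" "0 < \<eta> y" using z by auto
        show "k (fst z) (snd z) = 0"
        proof (rule ccontr)
          assume "k (fst z) (snd z) \<noteq> 0"
          then have "0 < k x y" using k0[OF xy(1,2)] z by auto
          then have "0 < k y x" using elim(2) z by simp
          have "0 < sk x y" unfolding sk_def using \<open>0 < k x y\<close> \<open>0 < k y x\<close> xy by auto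
          then show False using elim(1) z by simp
        qed
      qed
    qed
  qed
qed

end

context kop
begin

lemma Tlin: "(T ^^ n) (\<lambda>x. c * h x) = (\<lambda>x. c * (T ^^ n) h x)"
proof (induction n)
  case 0 then show ?case by simp
next
  case (Suc n)
  have "(T ^^ Suc n) (\<lambda>x. c * h x) = T ((T ^^ n) (\<lambda>x. c * h x))" by simp
  also have "\<dots> = T (\<lambda>x. c * (T ^^ n) h x)" using Suc by simp
  also have "\<dots> = (\<lambda>x. c * T ((T ^^ n) h) x)"
  proof
    fix x
    have "T (\<lambda>x. c * (T ^^ n) h x) x = (\<integral>y. c * (k x y * \<eta> y * (T ^^ n) h y) \<partial>M)"
      unfolding T_apply by (simp add: ac_simps)
    also have "\<dots> = c * T ((T ^^ n) h) x" unfolding T_apply by simp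
    finally show "T (\<lambda>x. c * (T ^^ n) h x) x = c * T ((T ^^ n) h) x" .
  qed
  finally show ?case by simp
qed

lemma Lp_scale:
  assumes c: "0 \<le> c"
  shows "Lp_norm p M (\<lambda>x. c * h x) = c * Lp_norm p M h"
proof -
  have "(\<integral>x. \<bar>c * h x\<bar> powr p \<partial>M) = c powr p * (\<integral>x. \<bar>h x\<bar> powr p \<partial>M)"
    using c by (simp add: abs_mult powr_mult)
  then have "Lp_norm p M (\<lambda>x. c * h x) = (c powr p) powr (1/p) * (\<integral>x. \<bar>h x\<bar> powr p \<partial>M) powr (1/p)"
    by (simp add: Lp_norm_def powr_mult)
  also have "(c powr p) powr (1/p) = c" using p1 c by (simp add: powr_powr)
  finally show ?thesis by (simp add: Lp_norm_def)
qed

lemma hard_loc: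
  assumes pos: "emeasure M (space M) \<noteq> 0" and sym: "support_ae_symmetric M k"
    and R0: "R_e p M k \<eta> = 0"
  shows "independent_set M k {x\<in>space M. 0 < \<eta> x}"
proof (rule ccontr)
  assume ni: "\<not> independent_set M k {x\<in>space M. 0 < \<eta> x}"
  then have a1: "aU 1 \<noteq> 0" using a1pos[OF sym] by blast
  define mO where "mO = measure M (space M)"
  have "mO \<noteq> 0" using pos by (simp add: mO_def emeasure_eq_measure)
  then have mpos: "mO > 0" using measure_nonneg[of M "space M"] unfolding mO_def by linarith
  define b where "b j = enn2real (aU j)" for j
  have aUb: "aU j = ennreal (b j)" for j using aU_fin[of j] by (simp add: b_def)
  have b_nonneg: "0 \<le> b j" for j by (simp add: b_def)
  have b0: "b 0 = mO" by (simp add: b_def aU_def mO_def measure_def)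
  have b1: "b 1 > 0" using a1 aUb[of 1] b_nonneg[of 1] by (auto simp: less_le)
  have bcs: "b (Suc j) ^ 2 \<le> b j * b (Suc (Suc j))" for j
  proof -
    have "ennreal (b (Suc j) ^ 2) \<le> ennreal (b j * b (Suc (Suc j)))"
      using aU_CS[of j] b_nonneg by (simp add: aUb ennreal_power ennreal_mult)
    then show ?thesis using b_nonneg by (simp add: ennreal_le_iff)
  qed
  define r where "r = b 1 / mO"
  have rpos: "r > 0" using b1 mpos by (simp add: r_def)
  have blow: "mO * r ^ j \<le> b j" for j
    using ratio_lower[of b j] b0 b1 bcs mpos by (simp add: r_def)
  have one_q: "integrable M (\<lambda>x. (1::real) powr q)" by simp
  have intTn: "integrable M (\<lambda>x. \<bar>Tn n x\<bar>)" for n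
    using holder_aux(1)[where p=p and q=q and f="\<lambda>x. 1" and g="\<lambda>x. \<bar>Tn n x\<bar>" and M=M] p1 q1 pq Tn_Lp[of n]
    by (auto simp: Lp_space_def)
  have hold: "(\<integral>x. \<bar>Tn n x\<bar> \<partial>M) \<le> mO powr (1/q) * Lp_norm p M (Tn n)" for n
    using holder_aux(2)[where p=p and q=q and f="\<lambda>x. 1" and g="\<lambda>x. \<bar>Tn n x\<bar>" and M=M] p1 q1 pq Tn_Lp[of n]
    by (auto simp: Lp_space_def Lp_norm_def mO_def)
  have bTn: "b j \<le> (\<integral>x. \<bar>Tn (2 * j) x\<bar> \<partial>M)" for j
  proof -
    have "ennreal (b j) = (\<integral>\<^sup>+ x. U (2 * j) x \<partial>M)" by (simp add: aU_even aUb)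
    also have "\<dots> \<le> (\<integral>\<^sup>+ x. ennreal \<bar>Tn (2 * j) x\<bar> \<partial>M)"
      using compare[of "2 * j"] by (intro nn_integral_mono_AE) (auto elim!: eventually_mono intro: order_trans ennreal_leI)
    also have "\<dots> = ennreal (\<integral>x. \<bar>Tn (2 * j) x\<bar> \<partial>M)"
      by (intro nn_integral_eq_integral intTn) auto
    finally show ?thesis by (simp add: ennreal_le_iff)
  qed
  define c0 where "c0 = 1 / mO powr (1/p)"
  have c0pos: "c0 > 0" using mpos by (simp add: c0_def)
  define g0 where "g0 = (\<lambda>x::'a. c0 * 1)"
  have g0Lp: "g0 \<in> Lp_space p M" by (simp add: g0_def Lp_space_def)
  have g0n: "Lp_norm p M g0 = 1"
  proof -
    have "Lp_norm p M g0 = c0 * Lp_norm p M one" unfolding g0_def using c0pos by (intro Lp_scale) simp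
    also have "Lp_norm p M one = mO powr (1/p)" by (simp add: Lp_norm_def mO_def)
    finally show ?thesis using mpos by (simp add: c0_def)
  qed
  have Lg: "Lp_norm p M ((T ^^ n) g0) = c0 * Lp_norm p M (Tn n)" for n
    unfolding g0_def Tlin using c0pos by (intro Lp_scale) simp
  define D where "D = c0 * mO / mO powr (1/q)"
  have Dpos: "D > 0" using c0pos mpos by (simp add: D_def)
  define \<rho> where "\<rho> = sqrt r"
  have \<rho>pos: "\<rho> > 0" using rpos by (simp add: \<rho>_def)
  have \<rho>2: "\<rho> ^ (2 * j) = r ^ j" for j using rpos by (simp add: \<rho>_def power_mult)
  have even: "D * \<rho> ^ (2 * j) \<le> Lp_norm p M ((T ^^ (2 * j)) g0)" for j
  proof -
    have mq: "mO powr (1/q) > 0" using mpos by simp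
    have "D * \<rho> ^ (2 * j) = c0 * (mO * r ^ j) / mO powr (1/q)" by (simp add: D_def \<rho>2)
    also have "\<dots> \<le> c0 * b j / mO powr (1/q)"
      using blow[of j] c0pos mq by (intro divide_right_mono mult_left_mono) auto
    also have "\<dots> \<le> c0 * (\<integral>x. \<bar>Tn (2 * j) x\<bar> \<partial>M) / mO powr (1/q)"
      using bTn[of j] c0pos mq by (intro divide_right_mono mult_left_mono) auto
    also have "\<dots> \<le> c0 * Lp_norm p M (Tn (2 * j))"
      using hold[of "2 * j"] c0pos mq by (simp add: divide_le_eq mult.commute mult.left_commute)
    also have "\<dots> = Lp_norm p M ((T ^^ (2 * j)) g0)" by (simp add: Lg)
    finally show ?thesis .
  qed
  have stepN: "Lp_norm p M ((T ^^ Suc n) g0) \<le> N * Lp_norm p M ((T ^^ n) g0)" for n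
    using Tbound(2)[of "(T ^^ n) g0"] Titer[OF g0Lp, of n] by simp
  have Npos: "N > 0"
  proof -
    have "D * \<rho> ^ (2 * 1) \<le> N * Lp_norm p M ((T ^^ 1) g0)"
      using even[of 1] stepN[of 1] by (simp add: numeral_2_eq_2)
    moreover have "D * \<rho> ^ (2 * 1) > 0" using Dpos \<rho>pos by simp
    ultimately have "N \<noteq> 0" by auto
    then show ?thesis using N_nonneg by linarith
  qed
  define E where "E = min D (D * \<rho> / N)"
  have Epos: "E > 0" using Dpos \<rho>pos Npos by (simp add: E_def)
  have oplow: "E * \<rho> ^ n \<le> op_norm p M (T ^^ n)" for n
  proof (cases "even n")
    case True
    then obtain j where n: "n = 2 * j" by (elim evenE)
    have "E * \<rho> ^ n \<le> D * \<rho> ^ n" using \<rho>pos by (intro mult_right_mono) (auto simp: E_def)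
    also have "\<dots> \<le> Lp_norm p M ((T ^^ n) g0)" using even[of j] n by simp
    also have "\<dots> \<le> op_norm p M (T ^^ n)" using g0Lp g0n by (intro opn_upper) auto
    finally show ?thesis .
  next
    case False
    then obtain j where n: "n = 2 * j + 1" by (elim oddE)
    have "D * \<rho> ^ Suc n \<le> Lp_norm p M ((T ^^ Suc n) g0)" using even[of "Suc j"] n by simp
    also have "\<dots> \<le> N * Lp_norm p M ((T ^^ n) g0)" by (rule stepN)
    also have "\<dots> \<le> N * op_norm p M (T ^^ n)"
      using g0Lp g0n N_nonneg by (intro mult_left_mono opn_upper) auto
    finally have "D * \<rho> * \<rho> ^ n \<le> N * op_norm p M (T ^^ n)" by (simp add: ac_simps)
    then have "(D * \<rho> / N) * \<rho> ^ n \<le> op_norm p M (T ^^ n)"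
      using Npos by (simp add: field_simps)
    moreover have "E * \<rho> ^ n \<le> (D * \<rho> / N) * \<rho> ^ n" using \<rho>pos by (intro mult_right_mono) (auto simp: E_def)
    ultimately show ?thesis by linarith
  qed
  have lowR: "min E 1 * \<rho> \<le> R_e p M k \<eta>"
    unfolding R_e_def spectral_radius_def
  proof (rule cInf_greatest)
    show "(\<lambda>n. op_norm p M (T ^^ n) powr (1 / real n)) ` {1..} \<noteq> {}" by auto
    fix v assume "v \<in> (\<lambda>n. op_norm p M (T ^^ n) powr (1 / real n)) ` {1..}"
    then obtain n where n: "n \<ge> 1" "v = op_norm p M (T ^^ n) powr (1 / real n)" by auto
    have "(E * \<rho> ^ n) powr (1 / real n) = E powr (1 / real n) * \<rho>"
    proof -
      have "(\<rho> ^ n) powr (1 / real n) = \<rho>"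
        using \<rho>pos n by (simp add: powr_realpow[symmetric] powr_powr)
      then show ?thesis by (simp add: powr_mult)
    qed
    moreover have "min E 1 \<le> E powr (1 / real n)"
    proof (cases "E \<ge> 1")
      case True then show ?thesis using ge_one_powr_ge_zero[of E "1 / real n"] by simp
    next
      case False
      then have "E powr 1 \<le> E powr (1 / real n)" using Epos n by (intro powr_mono') auto
      then show ?thesis using Epos by simp
    qed
    moreover have "(E * \<rho> ^ n) powr (1 / real n) \<le> v"
      unfolding n(2) using oplow[of n] Epos \<rho>pos by (intro powr_mono2) auto
    ultimately show "min E 1 * \<rho> \<le> v" using \<rho>pos by (smt (verit) mult_right_mono)
  qed
  moreover have "min E 1 * \<rho> > 0" using Epos \<rho>pos by simp
  ultimately show False using R0 by simp
qed

end

lemma Lp_norm_zero0[simp]: "Lp_norm p M (\<lambda>x. 0) = 0"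
  by (simp add: Lp_norm_def)

lemma zero_Lp[simp]: "(\<lambda>x. 0) \<in> Lp_space p M"
  by (simp add: Lp_space_def)

lemma Re_indep_zero:
  assumes "finite_measure M" "is_kernel M p k" "independent_set M k A"
  shows "R_e p M k (indicator A) = 0"
proof -
  interpret finite_measure M by fact
  interpret pair_sigma_finite M M by unfold_locales
  have ind: "AE w in M \<Otimes>\<^sub>M M. w \<in> A \<times> A \<longrightarrow> k (fst w) (snd w) = 0"
    using assms(3) by (simp add: independent_set_def)
  have "AE z in M. AE y in M. (z, y) \<in> A \<times> A \<longrightarrow> k z y = 0"
    using AE_pair[OF ind] by simp
  then have ae1: "AE z in M. z \<in> A \<longrightarrow> (AE y in M. y \<in> A \<longrightarrow> k z y = 0)"
    by eventually_elim auto
  define T where "T = T_op M k (indicator A)"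
  have TT: "T (T g) x = 0" for g x
  proof -
    have "AE z in M. indicator A z * T g z = 0"
      using ae1
    proof eventually_elim
      case (elim z)
      show ?case
      proof (cases "z \<in> A")
        case True
        with elim have "AE y in M. y \<in> A \<longrightarrow> k z y = 0" by simp
        then have "AE y in M. k z y * indicator A y * g y = 0"
          by eventually_elim (auto simp: indicator_def)
        then have "T g z = 0" unfolding T_def T_op_def by (rule integral_eq_zero_AE)
        then show ?thesis by simp
      qed simp
    qed
    then have "AE z in M. k x z * indicator A z * T g z = 0"
      by eventually_elim simp
    then show ?thesis unfolding T_def[symmetric] by (simp add: T_op_def T_def integral_eq_zero_AE)
  qed
  have T2: "(T ^^ 2) g = (\<lambda>x. 0)" for g
    by (simp add: numeral_2_eq_2 TT fun_eq_iff)
  have on: "op_norm p M (T ^^ 2) = 0"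
  proof -
    have "(\<lambda>g. Lp_norm p M ((T ^^ 2) g)) ` {g \<in> Lp_space p M. Lp_norm p M g \<le> 1} = {0}"
      using zero_Lp[of p M] by (auto simp: T2 intro!: image_eqI[of _ _ "\<lambda>x. 0"])
    then show ?thesis by (simp add: op_norm_def)
  qed
  show ?thesis
    unfolding R_e_def spectral_radius_def T_def[symmetric]
  proof (rule cInf_eq_minimum)
    show "0 \<in> (\<lambda>n. op_norm p M (T ^^ n) powr (1 / real n)) ` {1..}"
      using on by (auto intro!: image_eqI[of _ _ 2])
  qed auto
qed

lemma exist_max0:
  assumes fm: "finite_measure M" and km: "(\<lambda>z. k (fst z) (snd z)) \<in> borel_measurable (M \<Otimes>\<^sub>M M)"
  shows "\<exists>A. maximal_independent_set M k A"
proof -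
  interpret finite_measure M by fact
  interpret P: pair_sigma_finite M M by unfold_locales
  define \<alpha> where "\<alpha> = independence_number M k"
  define X where "X = measure M ` {A. independent_set M k A}"
  have emp: "independent_set M k {}" by (simp add: independent_set_def)
  have Xne: "X \<noteq> {}" using emp by (auto simp: X_def)
  have Xbdd: "bdd_above X"
    unfolding X_def bdd_above_def using bounded_measure by blast
  have "\<exists>A. independent_set M k A \<and> \<alpha> - inverse (real (Suc n)) < measure M A" for n
  proof -
    have "\<alpha> - inverse (real (Suc n)) < Sup X"
      by (simp add: \<alpha>_def X_def independence_number_def)
    then obtain x where "x \<in> X" "\<alpha> - inverse (real (Suc n)) < x"
      using less_cSupE[OF _ Xne] by blast
    then show ?thesis by (auto simp: X_def)
  qed
  then obtain A where Aind: "\<And>n. independent_set M k (A n)"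
    and Alow: "\<And>n. \<alpha> - inverse (real (Suc n)) < measure M (A n)"
    by metis
  have As: "A n \<in> sets M" for n using Aind by (simp add: independent_set_def)
  have Aup: "measure M (A n) \<le> \<alpha>" for n
    unfolding \<alpha>_def by (rule indep_le_alpha[OF fm Aind])
  have Alim: "(\<lambda>n. measure M (A n)) \<longlonglongrightarrow> \<alpha>"
  proof (rule tendsto_sandwich[of "\<lambda>n. \<alpha> - inverse (real (Suc n))" _ _ "\<lambda>n. \<alpha>"])
    show "\<forall>\<^sub>F n in sequentially. \<alpha> - inverse (real (Suc n)) \<le> measure M (A n)"
      by (intro always_eventually allI less_imp_le Alow)
    show "\<forall>\<^sub>F n in sequentially. measure M (A n) \<le> \<alpha>" by (intro always_eventually allI Aup)
    have "(\<lambda>n. \<alpha> - inverse (real (Suc n))) \<longlonglongrightarrow> \<alpha> - 0"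
      by (intro tendsto_intros LIMSEQ_inverse_real_of_nat)
    then show "(\<lambda>n. \<alpha> - inverse (real (Suc n))) \<longlonglongrightarrow> \<alpha>" by simp
  qed simp
  obtain U :: "nat filter" where Ubot: "U \<noteq> bot" and Useq: "U \<le> sequentially"
    and Uultra: "\<forall>P. eventually P U \<or> eventually (\<lambda>x. \<not> P x) U"
    using ultrafilter_exists by blast
  have uniq: "a = b" if "(f \<longlongrightarrow> a) U" "(f \<longlongrightarrow> b) U" for f :: "nat \<Rightarrow> real" and a b
    using tendsto_unique[OF Ubot] that by blast
  define nu0 where "nu0 E = Lim U (\<lambda>n. measure M (A n \<inter> E))" for E
  have nu0_lim: "((\<lambda>n. measure M (A n \<inter> E)) \<longlongrightarrow> nu0 E) U" for E
  proof -
    have "\<exists>L. ((\<lambda>n. measure M (A n \<inter> E)) \<longlongrightarrow> L) U"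
      by (rule ultra_tendsto_ex[OF Ubot Uultra, where a=0 and b="measure M (space M)"])
         (simp add: bounded_measure)
    then show ?thesis unfolding nu0_def using tendsto_Lim[OF Ubot] by blast
  qed
  have nu0_nonneg: "0 \<le> nu0 E" for E
    by (rule tendsto_lowerbound[OF nu0_lim]) (simp_all add: Ubot)
  have nu0_le: "nu0 E \<le> measure M E" if "E \<in> sets M" for E
    by (rule tendsto_upperbound[OF nu0_lim]) (use that in \<open>simp_all add: Ubot finite_measure_mono\<close>)
  have nu0_add: "nu0 (E \<union> F) = nu0 E + nu0 F" if "E \<in> sets M" "F \<in> sets M" "E \<inter> F = {}" for E F
  proof -
    have "measure M (A n \<inter> (E \<union> F)) = measure M (A n \<inter> E) + measure M (A n \<inter> F)" for n
    proof -
      have "A n \<inter> (E \<union> F) = (A n \<inter> E) \<union> (A n \<inter> F)" by auto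
      then show ?thesis using that As[of n] by (simp add: finite_measure_Union Int_assoc) (intro finite_measure_Union, auto)
    qed
    then have "((\<lambda>n. measure M (A n \<inter> (E \<union> F))) \<longlongrightarrow> nu0 E + nu0 F) U"
      by (simp add: tendsto_add nu0_lim)
    then show ?thesis using nu0_lim uniq by blast
  qed
  have nu0_empty: "nu0 {} = 0"
    using uniq[OF nu0_lim[of "{}"]] by simp
  have nu0_space: "nu0 (space M) = \<alpha>"
  proof -
    have "((\<lambda>n. measure M (A n \<inter> space M)) \<longlongrightarrow> \<alpha>) U"
      using tendsto_mono[OF Useq Alim] sets.sets_into_space[OF As] by (simp add: Int_absorb2)
    then show ?thesis using uniq nu0_lim by blast
  qed
  define nu where "nu = measure_of (space M) (sets M) (\<lambda>E. ennreal (nu0 E))"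
  have ca: "countably_additive (sets M) (\<lambda>E. ennreal (nu0 E))"
  proof (rule sets.empty_continuous_imp_countably_additive)
    show "positive (sets M) (\<lambda>E. ennreal (nu0 E))" by (simp add: positive_def nu0_empty)
    show "additive (sets M) (\<lambda>E. ennreal (nu0 E))"
      by (simp add: additive_def nu0_add nu0_nonneg ennreal_plus)
    show "\<forall>A\<in>sets M. ennreal (nu0 A) \<noteq> \<infinity>" by simp
    fix D :: "nat \<Rightarrow> 'a set" assume D: "range D \<subseteq> sets M" "decseq D" "(\<Inter>i. D i) = {}"
    have "(\<lambda>i. measure M (D i)) \<longlonglongrightarrow> measure M (\<Inter>i. D i)"
      by (rule finite_Lim_measure_decseq[OF D(1,2)])
    then have m0: "(\<lambda>i. measure M (D i)) \<longlonglongrightarrow> 0" using D(3) by simp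
    have "(\<lambda>i. nu0 (D i)) \<longlonglongrightarrow> 0"
      by (rule tendsto_sandwich[OF _ _ tendsto_const m0]) (use nu0_nonneg nu0_le D(1) in auto)
    then have "(\<lambda>i. ennreal (nu0 (D i))) \<longlonglongrightarrow> ennreal 0" by (rule tendsto_ennrealI)
    then show "(\<lambda>i. ennreal (nu0 (D i))) \<longlonglongrightarrow> 0" by simp
  qed
  have em_nu: "emeasure nu E = ennreal (nu0 E)" if "E \<in> sets M" for E
    unfolding nu_def
    by (rule emeasure_measure_of_sigma[OF sets.sigma_algebra_axioms _ ca that])
       (simp add: positive_def nu0_empty)
  have sets_nu: "sets nu = sets M" unfolding nu_def by (simp add: sets.space_closed)
  have space_nu: "space nu = space M" unfolding nu_def by (simp add: sets.space_closed)
  have me_nu: "measure nu E = nu0 E" if "E \<in> sets M" for E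
    using em_nu[OF that] nu0_nonneg by (simp add: measure_def)
  have fin_nu: "finite_measure nu"
    by (rule finite_measureI) (simp add: space_nu em_nu)
  interpret N: finite_measure nu by (rule fin_nu)
  have ac: "absolutely_continuous M nu"
    unfolding absolutely_continuous_def
  proof
    fix E assume "E \<in> null_sets M"
    then have E: "E \<in> sets M" "measure M E = 0" by (auto simp: null_sets_def measure_def)
    then have "nu0 E = 0" using nu0_le[OF E(1)] nu0_nonneg[of E] by simp
    then show "E \<in> null_sets nu" using E em_nu[OF E(1)] sets_nu by (simp add: null_sets_def)
  qed
  obtain f where fm_f: "f \<in> borel_measurable M" and dens: "density M f = nu"
    using Radon_Nikodym[OF ac sets_nu] by blast
  have sf_nu: "sigma_finite_measure nu" by (rule finite_measure.axioms(1)[OF fin_nu])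
  have prod_eq: "nu \<Otimes>\<^sub>M nu = density (M \<Otimes>\<^sub>M M) (\<lambda>(x,y). f x * f y)"
    using pair_measure_density[OF fm_f fm_f sigma_finite_measure_axioms] dens sf_nu by simp
  have finMM: "finite_measure (M \<Otimes>\<^sub>M M)" by (rule finite_measure_pair_measure[OF fm fm])
  have finNN: "finite_measure (nu \<Otimes>\<^sub>M nu)" by (rule finite_measure_pair_measure[OF fin_nu fin_nu])
  interpret MM: finite_measure "M \<Otimes>\<^sub>M M" by (rule finMM)
  interpret NN: finite_measure "nu \<Otimes>\<^sub>M nu" by (rule finNN)
  have sets_NN: "sets (nu \<Otimes>\<^sub>M nu) = sets (M \<Otimes>\<^sub>M M)" by (rule sets_pair_measure_cong[OF sets_nu sets_nu])
  have space_NN: "space (nu \<Otimes>\<^sub>M nu) = space (M \<Otimes>\<^sub>M M)" by (simp add: space_pair_measure space_nu)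
  define phi where "phi n D = measure (M \<Otimes>\<^sub>M M) (D \<inter> (A n \<times> A n))" for n D
  define lam where "lam D = measure (nu \<Otimes>\<^sub>M nu) D" for D
  have AA: "A n \<times> A n \<in> sets (M \<Otimes>\<^sub>M M)" for n using As by auto
  have rect: "((\<lambda>n. phi n (a \<times> b)) \<longlongrightarrow> lam (a \<times> b)) U" if ab: "a \<in> sets M" "b \<in> sets M" for a b
  proof -
    have "phi n (a \<times> b) = measure M (A n \<inter> a) * measure M (A n \<inter> b)" for n
    proof -
      have "(a \<times> b) \<inter> (A n \<times> A n) = (A n \<inter> a) \<times> (A n \<inter> b)" by auto
      then show ?thesis unfolding phi_def using ab As[of n]
        by (simp add: measure_def emeasure_pair_measure_Times enn2real_mult)
    qed
    moreover have "lam (a \<times> b) = nu0 a * nu0 b"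
      unfolding lam_def using ab
      by (simp add: measure_def N.emeasure_pair_measure_Times sets_nu enn2real_mult me_nu[symmetric])
    ultimately show ?thesis by (simp add: tendsto_mult nu0_lim)
  qed
  have claim: "((\<lambda>n. phi n D) \<longlongrightarrow> lam D) U" if D: "D \<in> sets (M \<Otimes>\<^sub>M M)" for D
    using Int_stable_pair_measure_generator pair_measure_closed D unfolding sets_pair_measure
  proof (induct rule: sigma_sets_induct_disjoint)
    case (basic A')
    then show ?case using rect by auto
  next
    case empty
    then show ?case by (simp add: phi_def lam_def)
  next
    case (compl A')
    have A's: "A' \<in> sets (M \<Otimes>\<^sub>M M)" using compl(1) by (simp add: sets_pair_measure)
    have "phi n (space M \<times> space M - A') = phi n (space M \<times> space M) - phi n A'" for n
    proof -
      have e: "(space M \<times> space M - A') \<inter> (A n \<times> A n) = (A n \<times> A n) - (A' \<inter> (A n \<times> A n))"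
        using sets.sets_into_space[OF As[of n]] by auto
      have "(space M \<times> space M) \<inter> (A n \<times> A n) = A n \<times> A n"
        using sets.sets_into_space[OF As[of n]] by auto
      then show ?thesis unfolding phi_def e using A's AA[of n]
        by (simp add: MM.finite_measure_Diff)
    qed
    moreover have "lam (space M \<times> space M - A') = lam (space M \<times> space M) - lam A'"
    proof -
      have A'sub: "A' \<subseteq> space M \<times> space M"
        using sets.sets_into_space[OF A's] by (simp add: space_pair_measure)
      show ?thesis
        unfolding lam_def using A's sets_NN space_NN A'sub
        by (intro NN.finite_measure_Diff) (auto simp: space_pair_measure space_nu)
    qed
    ultimately show ?case
      using tendsto_diff[OF rect[OF sets.top sets.top] compl(2)] by simp
  next
    case (union F)
    have Fs: "range F \<subseteq> sets (M \<Otimes>\<^sub>M M)" using union(2) by (simp add: sets_pair_measure)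
    have FsN: "range F \<subseteq> sets (nu \<Otimes>\<^sub>M nu)" using Fs sets_NN by simp
    have IH: "((\<lambda>n. phi n (F i)) \<longlongrightarrow> lam (F i)) U" for i using union(3) by blast
    show ?case
    proof (rule tendsto_approx)
      fix e :: real assume e: "e > 0"
      have t1: "(\<lambda>m. measure (M \<Otimes>\<^sub>M M) (\<Union>i\<in>{m..}. F i)) \<longlonglongrightarrow> 0"
        by (rule fm_tail[OF finMM Fs union(1)])
      have t2: "(\<lambda>m. measure (nu \<Otimes>\<^sub>M nu) (\<Union>i\<in>{m..}. F i)) \<longlonglongrightarrow> 0"
        by (rule fm_tail[OF finNN FsN union(1)])
      have "eventually (\<lambda>m. measure (M \<Otimes>\<^sub>M M) (\<Union>i\<in>{m..}. F i) < e
          \<and> measure (nu \<Otimes>\<^sub>M nu) (\<Union>i\<in>{m..}. F i) < e) sequentially"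
        using order_tendstoD(2)[OF t1 e] order_tendstoD(2)[OF t2 e] by (rule eventually_conj)
      then obtain m where m1: "measure (M \<Otimes>\<^sub>M M) (\<Union>i\<in>{m..}. F i) < e"
        and m2: "measure (nu \<Otimes>\<^sub>M nu) (\<Union>i\<in>{m..}. F i) < e"
        unfolding eventually_sequentially by blast
      define g where "g n = (\<Sum>i<m. phi n (F i))" for n
      define c where "c = (\<Sum>i<m. lam (F i))"
      have gc: "(g \<longlongrightarrow> c) U" unfolding g_def c_def by (intro tendsto_sum IH)
      have "lam (\<Union>i. F i) = c + measure (nu \<Otimes>\<^sub>M nu) (\<Union>i\<in>{m..}. F i)"
        unfolding lam_def c_def by (rule fm_split_union[OF finNN FsN union(1)])
      then have c1: "\<bar>c - lam (\<Union>i. F i)\<bar> \<le> e" using m2 by simp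
      have gn: "\<bar>phi n (\<Union>i. F i) - g n\<bar> \<le> e" for n
      proof -
        define F' where "F' i = F i \<inter> (A n \<times> A n)" for i
        have F's: "range F' \<subseteq> sets (M \<Otimes>\<^sub>M M)" using Fs AA[of n] by (auto simp: F'_def)
        have F'd: "disjoint_family F'" using union(1) by (auto simp: F'_def disjoint_family_on_def)
        have sp: "measure (M \<Otimes>\<^sub>M M) (\<Union>i. F' i) = (\<Sum>i<m. measure (M \<Otimes>\<^sub>M M) (F' i)) + measure (M \<Otimes>\<^sub>M M) (\<Union>i\<in>{m..}. F' i)"
          by (rule fm_split_union[OF finMM F's F'd])
        have un: "(\<Union>i. F' i) = (\<Union>i. F i) \<inter> (A n \<times> A n)" by (auto simp: F'_def)
        have TS: "(\<Union>i\<in>{m..}. F i) \<in> sets (M \<Otimes>\<^sub>M M)" using Fs by auto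
        have le: "measure (M \<Otimes>\<^sub>M M) (\<Union>i\<in>{m..}. F' i) \<le> measure (M \<Otimes>\<^sub>M M) (\<Union>i\<in>{m..}. F i)"
          by (rule MM.finite_measure_mono[OF _ TS]) (auto simp: F'_def)
        have "phi n (\<Union>i. F i) - g n = measure (M \<Otimes>\<^sub>M M) (\<Union>i\<in>{m..}. F' i)"
          using sp un unfolding phi_def g_def F'_def by simp
        then show ?thesis using le m1 by simp
      qed
      show "\<exists>g c. (g \<longlongrightarrow> c) U \<and> \<bar>c - lam (\<Union>i. F i)\<bar> \<le> e \<and> eventually (\<lambda>n. \<bar>phi n (\<Union>i. F i) - g n\<bar> \<le> e) U"
        using gc c1 gn by (intro exI[of _ g] exI[of _ c]) auto
    qed
  qed
  note km[measurable]
  define G' where "G' = {z \<in> space (M \<Otimes>\<^sub>M M). k (fst z) (snd z) \<noteq> 0}"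
  have G's: "G' \<in> sets (M \<Otimes>\<^sub>M M)" unfolding G'_def by measurable
  have phi0: "phi n G' = 0" for n
  proof -
    have ind: "AE z in M \<Otimes>\<^sub>M M. z \<in> A n \<times> A n \<longrightarrow> k (fst z) (snd z) = 0"
      using Aind[of n] by (simp add: independent_set_def)
    have "AE z in M \<Otimes>\<^sub>M M. z \<notin> G' \<inter> (A n \<times> A n)"
      using ind by eventually_elim (auto simp: G'_def)
    then have "G' \<inter> (A n \<times> A n) \<in> null_sets (M \<Otimes>\<^sub>M M)"
      using G's AA[of n] by (subst AE_iff_null_sets) auto
    then show ?thesis unfolding phi_def by (simp add: null_sets_def measure_def)
  qed
  have "lam G' = 0"
    using claim[OF G's] uniq[of "\<lambda>n. phi n G'" "lam G'" 0] by (simp add: phi0)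
  then have "emeasure (nu \<Otimes>\<^sub>M nu) G' = 0"
    using NN.emeasure_eq_measure[of G'] by (simp add: lam_def)
  then have "(\<integral>\<^sup>+ z. (\<lambda>(x,y). f x * f y) z * indicator G' z \<partial>(M \<Otimes>\<^sub>M M)) = 0"
    using G's fm_f by (simp add: prod_eq emeasure_density)
  then have AEz: "AE z in M \<Otimes>\<^sub>M M. (\<lambda>(x,y). f x * f y) z * indicator G' z = 0"
    using G's fm_f by (subst (asm) nn_integral_0_iff_AE) auto
  define B where "B = {x \<in> space M. f x \<noteq> 0}"
  have Bs: "B \<in> sets M" using fm_f unfolding B_def by measurable
  have indB: "independent_set M k B"
    unfolding independent_set_def
  proof (intro conjI Bs)
    show "AE z in M \<Otimes>\<^sub>M M. z \<in> B \<times> B \<longrightarrow> k (fst z) (snd z) = 0"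
      using AEz AE_space
    proof eventually_elim
      case (elim z)
      obtain x y where z: "z = (x, y)" by (cases z)
      show ?case
      proof
        assume zB: "z \<in> B \<times> B"
        show "k (fst z) (snd z) = 0"
        proof (rule ccontr)
          assume "k (fst z) (snd z) \<noteq> 0"
          then have "z \<in> G'" using elim(2) by (simp add: G'_def)
          then have "f x * f y = 0" using elim(1) z by simp
          then show False using zB z by (simp add: B_def)
        qed
      qed
    qed
  qed
  have "(\<integral>\<^sup>+ x. f x * indicator (space M - B) x \<partial>M) = (\<integral>\<^sup>+ x. 0 \<partial>M)"
    by (rule nn_integral_cong) (auto simp: B_def indicator_def)
  then have "emeasure nu (space M - B) = 0"
    using Bs fm_f by (simp add: dens[symmetric] emeasure_density)
  then have z: "nu0 (space M - B) = 0"
    using em_nu[of "space M - B"] Bs nu0_nonneg[of "space M - B"] by auto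
  have "nu0 (space M) = nu0 B + nu0 (space M - B)"
  proof -
    have "space M = B \<union> (space M - B)" using Bs sets.sets_into_space by auto
    then show ?thesis using nu0_add[of B "space M - B"] Bs by auto
  qed
  then have "\<alpha> \<le> measure M B" using nu0_space z nu0_le[OF Bs] by simp
  moreover have "measure M B \<le> \<alpha>" unfolding \<alpha>_def by (rule indep_le_alpha[OF fm indB])
  ultimately show ?thesis using indB by (auto simp: maximal_independent_set_def \<alpha>_def)
qed


lemma hard:
  assumes "finite_measure M" "emeasure M (space M) \<noteq> 0" "is_kernel M p k"
    "support_ae_symmetric M k" "\<eta> \<in> strategies M" "R_e p M k \<eta> = 0"
  shows "independent_set M k {x\<in>space M. 0 < \<eta> x}"
proof -
  interpret kop M p k \<eta> by (rule kop.intro[OF assms(1,3,5)])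
  show ?thesis using hard_loc assms(2,4,6) by blast
qed

lemma exist_max:
  assumes "finite_measure M" "is_kernel M p k"
  shows "\<exists>A. maximal_independent_set M k A"
  using exist_max0[OF assms(1)] assms(2) by (simp add: is_kernel_def)

lemma indicator_strat: "A \<in> sets M \<Longrightarrow> indicator A \<in> strategies M"
  by (auto simp: strategies_def indicator_def)

lemma cost_indicator:
  assumes "finite_measure M" "A \<in> sets M"
  shows "unif_cost M (indicator A) = measure M (space M) - measure M A"
proof -
  interpret finite_measure M by fact
  have "unif_cost M (indicator A) = (\<integral>x. 1 \<partial>M) - (\<integral>x. indicator A x \<partial>M)"
    unfolding unif_cost_def using assms
    by (intro Bochner_Integration.integral_diff) (auto intro!: integrable_real_indicator simp: emeasure_eq_measure)
  then show ?thesis using assms by simp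
qed

lemma strat_integrable:
  assumes "finite_measure M" "\<eta> \<in> strategies M"
  shows "integrable M \<eta>"
proof -
  interpret finite_measure M by fact
  show ?thesis using assms(2) unfolding strategies_def
    by (intro integrable_const_bound[where B=1]) auto
qed

lemma cost_lower:
  assumes "finite_measure M" "emeasure M (space M) \<noteq> 0" "is_kernel M p k"
    "support_ae_symmetric M k" "\<eta> \<in> strategies M" "R_e p M k \<eta> = 0"
  defines "B \<equiv> {x\<in>space M. 0 < \<eta> x}"
  shows "measure M (space M) - independence_number M k \<le> unif_cost M \<eta>"
    "measure M (space M) - measure M B \<le> unif_cost M \<eta>"
    "independent_set M k B"
proof -
  interpret finite_measure M by fact
  show ind: "independent_set M k B" unfolding B_def by (rule hard[OF assms(1-6)])
  have Bs: "B \<in> sets M" using ind by (simp add: independent_set_def)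
  have ie: "integrable M \<eta>" by (rule strat_integrable[OF assms(1,5)])
  have iB: "integrable M (indicator B :: _ \<Rightarrow> real)"
    using Bs by (auto intro!: integrable_real_indicator simp: emeasure_eq_measure)
  have "(\<integral>x. \<eta> x \<partial>M) \<le> (\<integral>x. indicator B x \<partial>M)"
    by (rule integral_mono[OF ie iB]) (use assms(5) in \<open>auto simp: strategies_def B_def indicator_def\<close>)
  then have le: "(\<integral>x. \<eta> x \<partial>M) \<le> measure M B" using Bs by simp
  have "unif_cost M \<eta> = (\<integral>x. 1 \<partial>M) - (\<integral>x. \<eta> x \<partial>M)"
    unfolding unif_cost_def using ie
    by (intro Bochner_Integration.integral_diff) auto
  then have c: "unif_cost M \<eta> = measure M (space M) - (\<integral>x. \<eta> x \<partial>M)" by simp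
  show "measure M (space M) - measure M B \<le> unif_cost M \<eta>" using c le by simp
  moreover have "measure M B \<le> independence_number M k"
    by (rule indep_le_alpha[OF assms(1) ind])
  ultimately show "measure M (space M) - independence_number M k \<le> unif_cost M \<eta>" by simp
qed

lemma Re_le0:
  "R_e p M k \<eta> \<le> 0 \<longleftrightarrow> R_e p M k \<eta> = 0"
  using Re_nonneg[of p M k \<eta>] by auto

lemma Cstar0:
  assumes "finite_measure M" "emeasure M (space M) \<noteq> 0" "is_kernel M p k"
    "support_ae_symmetric M k"
  shows "C_star p M k 0 = measure M (space M) - independence_number M k"
proof -
  obtain A where A: "maximal_independent_set M k A" using exist_max[OF assms(1,3)] by blast
  have As: "A \<in> sets M" using A by (simp add: maximal_independent_set_def independent_set_def)
  have RA: "R_e p M k (indicator A) = 0"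
    using Re_indep_zero[OF assms(1,3)] A by (simp add: maximal_independent_set_def)
  have cA: "unif_cost M (indicator A) = measure M (space M) - independence_number M k"
    using cost_indicator[OF assms(1) As] A by (simp add: maximal_independent_set_def)
  show ?thesis unfolding C_star_def
  proof (rule cInf_eq_minimum)
    show "measure M (space M) - independence_number M k
      \<in> unif_cost M ` {\<eta> \<in> strategies M. R_e p M k \<eta> \<le> 0}"
      using RA cA indicator_strat[OF As] by (auto intro!: image_eqI[of _ _ "indicator A"])
    fix c assume "c \<in> unif_cost M ` {\<eta> \<in> strategies M. R_e p M k \<eta> \<le> 0}"
    then obtain \<eta> where "\<eta> \<in> strategies M" "R_e p M k \<eta> = 0" "c = unif_cost M \<eta>"
      by (auto simp: Re_le0)
    then show "measure M (space M) - independence_number M k \<le> c"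
      using cost_lower(1)[OF assms] by simp
  qed
qed

lemma Restar_zero:
  assumes "R_e p M k \<eta> = 0" "\<eta> \<in> strategies M"
  shows "R_e_star p M k (unif_cost M \<eta>) = 0"
  unfolding R_e_star_def
  by (rule cInf_eq_minimum) (use assms Re_nonneg in auto)

theorem mainTheorem3:
  fixes M :: "'a measure" and k :: "'a \<Rightarrow> 'a \<Rightarrow> real" and p :: real
  assumes "finite_measure M" and "emeasure M (space M) \<noteq> 0"
    and "is_kernel M p k"
    and "support_ae_symmetric M k"
  shows "(\<forall>A \<in> sets M.
            (pareto_optimal p M k (indicator A) \<and> R_e p M k (indicator A) = 0)
              \<longleftrightarrow> maximal_independent_set M k A)
       \<and> (\<forall>\<eta>. pareto_optimal p M k \<eta> \<and> R_e p M k \<eta> = 0 \<longrightarrow>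
            (\<exists>A. maximal_independent_set M k A \<and> (AE x in M. \<eta> x = indicator A x)))
       \<and> (\<exists>A. maximal_independent_set M k A)
       \<and> C_star p M k 0 = measure M (space M) - independence_number M k"
proof (intro conjI ballI allI impI)
  interpret finite_measure M by fact
  note C0 = Cstar0[OF assms]
  show "\<exists>A. maximal_independent_set M k A" using exist_max[OF assms(1,3)] .
  show "C_star p M k 0 = measure M (space M) - independence_number M k" by (rule C0)
  fix A assume As: "A \<in> sets M"
  show "(pareto_optimal p M k (indicator A) \<and> R_e p M k (indicator A) = 0)
              \<longleftrightarrow> maximal_independent_set M k A"
  proof
    assume h: "pareto_optimal p M k (indicator A) \<and> R_e p M k (indicator A) = 0"
    have "{x\<in>space M. 0 < (indicator A x::real)} = A" using sets.sets_into_space[OF As]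
      by (auto simp: indicator_def)
    then have ind: "independent_set M k A"
      using cost_lower(3)[OF assms indicator_strat[OF As]] h by simp
    have "unif_cost M (indicator A) = C_star p M k (R_e p M k (indicator A))"
      using h unfolding pareto_optimal_def by blast
    then have "unif_cost M (indicator A) = measure M (space M) - independence_number M k"
      using h C0 by simp
    then show "maximal_independent_set M k A"
      using ind cost_indicator[OF assms(1) As] by (simp add: maximal_independent_set_def)
  next
    assume A: "maximal_independent_set M k A"
    have RA: "R_e p M k (indicator A) = 0"
      using Re_indep_zero[OF assms(1,3)] A by (simp add: maximal_independent_set_def)
    have cA: "unif_cost M (indicator A) = measure M (space M) - independence_number M k"
      using cost_indicator[OF assms(1) As] A by (simp add: maximal_independent_set_def)
    show "pareto_optimal p M k (indicator A) \<and> R_e p M k (indicator A) = 0"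
      unfolding pareto_optimal_def
      using RA cA C0 Restar_zero[OF RA indicator_strat[OF As]] indicator_strat[OF As]
      by simp
  qed
next
  interpret finite_measure M by fact
  note C0 = Cstar0[OF assms]
  fix \<eta> assume h: "pareto_optimal p M k \<eta> \<and> R_e p M k \<eta> = 0"
  define B where "B = {x\<in>space M. 0 < \<eta> x}"
  have st: "\<eta> \<in> strategies M" using h by (simp add: pareto_optimal_def)
  note cl = cost_lower[OF assms st conjunct2[OF h], folded B_def]
  have Bs: "B \<in> sets M" using cl(3) by (simp add: independent_set_def)
  have "unif_cost M \<eta> = C_star p M k (R_e p M k \<eta>)"
    using h unfolding pareto_optimal_def by blast
  then have c: "unif_cost M \<eta> = measure M (space M) - independence_number M k"
    using h C0 by simp
  have mB: "measure M B = independence_number M k"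
    using cl(2) c indep_le_alpha[OF assms(1) cl(3)] by simp
  have ie: "integrable M \<eta>" by (rule strat_integrable[OF assms(1) st])
  have "unif_cost M \<eta> = (\<integral>x. 1 \<partial>M) - (\<integral>x. \<eta> x \<partial>M)"
    unfolding unif_cost_def using ie
    by (intro Bochner_Integration.integral_diff) auto
  then have "(\<integral>x. \<eta> x \<partial>M) = measure M B" using c mB by simp
  moreover have iB: "integrable M (indicator B :: _ \<Rightarrow> real)"
    using Bs by (auto intro!: integrable_real_indicator simp: emeasure_eq_measure)
  ultimately have "(\<integral>x. indicator B x - \<eta> x \<partial>M) = 0"
    using ie Bs by (simp add: Bochner_Integration.integral_diff[OF iB ie])
  moreover have "integrable M (\<lambda>x. indicator B x - \<eta> x)" using iB ie by (rule Bochner_Integration.integrable_diff)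
  moreover have "AE x in M. 0 \<le> indicator B x - \<eta> x"
    using st unfolding strategies_def B_def by (auto simp: indicator_def)
  ultimately have "AE x in M. indicator B x - \<eta> x = 0"
    using integral_nonneg_eq_0_iff_AE by blast
  then have "AE x in M. \<eta> x = indicator B x" by auto
  then show "\<exists>A. maximal_independent_set M k A \<and> (AE x in M. \<eta> x = indicator A x)"
    using cl(3) mB by (auto simp: maximal_independent_set_def)
qed

end
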